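(* Let $v^{(1)},\dots,v^{(p)}\in\mathbb{R}^n$ (all entries finite) and let $V$ be the $n\times p$ matrix with columns $v^{(k)}$. Then the operator $T:\mathbb{R}^n\to\mathbb{R}^n$, $$T_i(x)=\min_{k\in[p]}\Big[-V_{ik}+\max_{j\in[n],\,j\neq i}(V_{jk}+x_j)\Big],\qquad i\in[n],$$ has a finite eigenvector, i.e., there exist $a\in\mathbb{R}^n$ and $\lambda\in\mathbb{R}$ such that $T(a)=\lambda+a$ (and then $\lambda=\rho(T)$).
   Context: $\lambda+a$ denotes $(\lambda+a_i)_i$. $\rho(T)=\sup\{\lambda\in\mathbb{R}\cup\{-\infty\}:\exists u\in(\mathbb{R}\cup\{-\infty\})^n,\ u\not\equiv-\infty,\ T(u)=\lambda+u\}$ for $T$ extended to $(\mathbb{R}\cup\{-\infty\})^n$ by the same formula. Here $n\ge2$ is implicit. *)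

theory Defs
  imports "HOL-Analysis.Analysis" "HOL-Library.Extended_Real"
begin

definition minmax_op :: "real^'p^'n \<Rightarrow> real^'n \<Rightarrow> real^'n" where
  "minmax_op V x = (\<chi> i. Min ((\<lambda>k. - V$i$k + Max ((\<lambda>j. V$j$k + x$j) ` {j. j \<noteq> i})) ` UNIV))"

text \<open>The same formula on (R \<union> {-\<infinity>})^n, represented by ereal vectors with no +\<infinity> entries.\<close>
definition minmax_op_ext :: "real^'p^'n \<Rightarrow> ereal^'n \<Rightarrow> ereal^'n" where
  "minmax_op_ext V u = (\<chi> i. Min ((\<lambda>k. ereal (- V$i$k) + Max ((\<lambda>j. ereal (V$j$k) + u$j) ` {j. j \<noteq> i})) ` UNIV))"

definition spectral_rho :: "real^'p^'n \<Rightarrow> ereal" where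
  "spectral_rho V = Sup {l. l \<noteq> \<infinity> \<and> (\<exists>u::ereal^'n. (\<forall>i. u$i \<noteq> \<infinity>) \<and> (\<exists>i. u$i \<noteq> -\<infinity>)
       \<and> minmax_op_ext V u = (\<chi> i. l + u$i))}"

end

theory Submission
  imports Defs
begin


lemma Max_plus_const:
  fixes g :: "'a \<Rightarrow> real"
  assumes "finite A" "A \<noteq> {}"
  shows "Max ((\<lambda>k. g k + c) ` A) = Max (g ` A) + c"
proof -
  have "(\<lambda>k. g k + c) ` A = (\<lambda>y. y + c) ` (g ` A)" by (simp add: image_image)
  moreover have "mono (\<lambda>y::real. y + c)" by (simp add: mono_def)
  ultimately show ?thesis using mono_Max_commute[of "\<lambda>y. y + c" "g ` A"] assms by simp
qed

lemma Min_plus_const: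
  fixes g :: "'a \<Rightarrow> real"
  assumes "finite A" "A \<noteq> {}"
  shows "Min ((\<lambda>k. g k + c) ` A) = Min (g ` A) + c"
proof -
  have "(\<lambda>k. g k + c) ` A = (\<lambda>y. y + c) ` (g ` A)" by (simp add: image_image)
  moreover have "mono (\<lambda>y::real. y + c)" by (simp add: mono_def)
  ultimately show ?thesis using mono_Min_commute[of "\<lambda>y. y + c" "g ` A"] assms by simp
qed

lemma exists_other:
  assumes "CARD('n::finite) \<ge> 2"
  shows "\<exists>j::'n. j \<noteq> i"
proof (rule ccontr)
  assume "\<not> ?thesis"
  then have "(UNIV::'n set) = {i}" by auto
  then have "CARD('n) = card {i}" by (simp only:)
  then show False using assms by simp
qed

lemma minmax_shift:
  fixes V :: "real^'p::finite^'n::finite"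
  assumes "CARD('n) \<ge> 2"
  shows "minmax_op V (\<chi> j. x$j + c) = (\<chi> i. minmax_op V x $ i + c)"
proof -
  have "minmax_op V (\<chi> j. x$j + c) $ i = minmax_op V x $ i + c" for i
  proof -
    have ne: "{j. j \<noteq> i} \<noteq> {}" using exists_other[OF assms, of i] by auto
    have mx: "Max ((\<lambda>j. V$j$k + (x$j + c)) ` {j. j \<noteq> i}) = Max ((\<lambda>j. V$j$k + x$j) ` {j. j \<noteq> i}) + c" for k
      using Max_plus_const[OF _ ne, of "\<lambda>j. V$j$k + x$j" c] by (simp add: add.assoc)
    have "minmax_op V (\<chi> j. x$j + c) $ i = Min ((\<lambda>k. (- V$i$k + Max ((\<lambda>j. V$j$k + x$j) ` {j. j \<noteq> i})) + c) ` UNIV)"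
      unfolding minmax_op_def vec_lambda_beta mx by (simp add: algebra_simps)
    also have "\<dots> = minmax_op V x $ i + c"
      unfolding minmax_op_def by (subst Min_plus_const) auto
    finally show ?thesis .
  qed
  then show ?thesis by (simp add: vec_eq_iff)
qed

lemma mono_ereal': "mono ereal" by (simp add: mono_def)

lemma minmax_ext_finite:
  fixes V :: "real^'p::finite^'n::finite"
  assumes "CARD('n) \<ge> 2"
  shows "minmax_op_ext V (\<chi> i. ereal (x$i)) = (\<chi> i. ereal (minmax_op V x $ i))"
proof -
  have "minmax_op_ext V (\<chi> i. ereal (x$i)) $ i = ereal (minmax_op V x $ i)" for i
  proof -
    have ne: "{j. j \<noteq> i} \<noteq> {}" using exists_other[OF assms, of i] by auto
    have "Max ((\<lambda>j. ereal (V$j$k) + ereal (x$j)) ` {j. j \<noteq> i}) = ereal (Max ((\<lambda>j. V$j$k + x$j) ` {j. j \<noteq> i}))" for k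
    proof -
      have "(\<lambda>j. ereal (V$j$k) + ereal (x$j)) ` {j. j \<noteq> i} = ereal ` ((\<lambda>j. V$j$k + x$j) ` {j. j \<noteq> i})"
        by (auto simp: image_image)
      then show ?thesis using mono_Max_commute[OF mono_ereal', of "(\<lambda>j. V$j$k + x$j) ` {j. j \<noteq> i}"] ne by simp
    qed
    then have "minmax_op_ext V (\<chi> i. ereal (x$i)) $ i = Min (ereal ` ((\<lambda>k. - V$i$k + Max ((\<lambda>j. V$j$k + x$j) ` {j. j \<noteq> i})) ` UNIV))"
      unfolding minmax_op_ext_def by (simp add: image_image)
    also have "\<dots> = ereal (minmax_op V x $ i)"
      unfolding minmax_op_def using mono_Min_commute[OF mono_ereal', of "(\<lambda>k. - V$i$k + Max ((\<lambda>j. V$j$k + x$j) ` {j. j \<noteq> i})) ` UNIV"]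
      by simp
    finally show ?thesis .
  qed
  then show ?thesis by (simp add: vec_eq_iff)
qed

lemma minmax_ext_mono:
  fixes V :: "real^'p::finite^'n::finite"
  assumes "CARD('n) \<ge> 2" "\<And>i. u$i \<le> w$i"
  shows "minmax_op_ext V u $ i \<le> minmax_op_ext V w $ i"
proof -
  have ne: "{j. j \<noteq> i} \<noteq> {}" using exists_other[OF assms(1), of i] by auto
  have "Max ((\<lambda>j. ereal (V$j$k) + u$j) ` {j. j \<noteq> i}) \<le> Max ((\<lambda>j. ereal (V$j$k) + w$j) ` {j. j \<noteq> i})" for k
  proof -
    have "ereal (V$j$k) + u$j \<le> Max ((\<lambda>j. ereal (V$j$k) + w$j) ` {j. j \<noteq> i})" if "j \<noteq> i" for j
    proof -
      have "ereal (V$j$k) + u$j \<le> ereal (V$j$k) + w$j" by (intro add_left_mono assms(2))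
      also have "\<dots> \<le> Max ((\<lambda>j. ereal (V$j$k) + w$j) ` {j. j \<noteq> i})" using that by (intro Max_ge) auto
      finally show ?thesis .
    qed
    then show ?thesis using ne by (subst Max_le_iff) auto
  qed
  then show ?thesis unfolding minmax_op_ext_def
    by (auto simp: Min_le_iff Min_ge_iff intro: add_left_mono order_trans)
qed

lemma rho_eq:
  fixes V :: "real^'p::finite^'n::finite"
  assumes n2: "CARD('n) \<ge> 2" and eig: "minmax_op V a = (\<chi> i. l + a$i)"
  shows "spectral_rho V = ereal l"
  unfolding spectral_rho_def
proof (rule Sup_eqI)
  fix y assume "y \<in> {l. l \<noteq> \<infinity> \<and> (\<exists>u::ereal^'n. (\<forall>i. u$i \<noteq> \<infinity>) \<and> (\<exists>i. u$i \<noteq> -\<infinity>)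
       \<and> minmax_op_ext V u = (\<chi> i. l + u$i))}"
  then obtain u :: "ereal^'n" where y: "y \<noteq> \<infinity>" and ui: "\<forall>i. u$i \<noteq> \<infinity>" and i0: "\<exists>i. u$i \<noteq> -\<infinity>"
    and ue: "minmax_op_ext V u = (\<chi> i. y + u$i)" by blast
  show "y \<le> ereal l"
  proof (cases y)
    case MInf then show ?thesis by simp
  next
    case PInf then show ?thesis using y by simp
  next
    case (real r)
    define F where "F = {i. u$i \<noteq> -\<infinity>}"
    have Fne: "F \<noteq> {}" using i0 F_def by auto
    define c where "c = Max ((\<lambda>i. real_of_ereal (u$i) - a$i) ` F)"
    obtain m where mF: "m \<in> F" and mc: "c = real_of_ereal (u$m) - a$m"
    proof -
      have "c \<in> (\<lambda>i. real_of_ereal (u$i) - a$i) ` F"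
        unfolding c_def using Fne by (intro Max_in) auto
      then show ?thesis using that by auto
    qed
    have um: "u$m = ereal (a$m + c)" using mF ui[rule_format, of m] mc F_def
      by (cases "u$m") auto
    define w where "w = (\<chi> i. ereal ((\<chi> j. a$j + c)$i))"
    have uw: "u$i \<le> w$i" for i
    proof (cases "i \<in> F")
      case True
      then have "real_of_ereal (u$i) - a$i \<le> c" unfolding c_def by (intro Max_ge) auto
      moreover have "u$i = ereal (real_of_ereal (u$i))" using True ui[rule_format, of i] F_def
        by (cases "u$i") auto
      ultimately show ?thesis unfolding w_def by (metis ereal_less_eq(3) add.commute diff_le_eq vec_lambda_beta)
    next
      case False then show ?thesis by (simp add: F_def)
    qed
    have "minmax_op_ext V w = (\<chi> i. ereal (l + (a$i + c)))"
      unfolding w_def minmax_ext_finite[OF n2] minmax_shift[OF n2] eig by (simp add: add.assoc)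
    then have "minmax_op_ext V u $ m \<le> ereal (l + (a$m + c))"
      using minmax_ext_mono[OF n2 uw, of V m] by simp
    then have "ereal r + ereal (a$m + c) \<le> ereal (l + (a$m + c))"
      using ue real um by simp
    then show ?thesis using real by simp
  qed
next
  fix y assume ub: "\<And>z. z \<in> {l. l \<noteq> \<infinity> \<and> (\<exists>u::ereal^'n. (\<forall>i. u$i \<noteq> \<infinity>) \<and> (\<exists>i. u$i \<noteq> -\<infinity>)
       \<and> minmax_op_ext V u = (\<chi> i. l + u$i))} \<Longrightarrow> z \<le> y"
  have "minmax_op_ext V (\<chi> i. ereal (a$i)) = (\<chi> i. ereal l + (\<chi> i. ereal (a$i))$i)"
    unfolding minmax_ext_finite[OF n2] eig by simp
  then show "ereal l \<le> y"
    by (intro ub CollectI conjI exI[of _ "\<chi> i. ereal (a$i)"]) auto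
qed

lemma card2_unique:
  assumes "CARD('n::finite) = 2" "(j::'n) \<noteq> i" "j' \<noteq> i"
  shows "j = j'"
proof (rule ccontr)
  assume "j \<noteq> j'"
  then have "card {i, j, j'} = 3" using assms by auto
  moreover have "card {i, j, j'} \<le> CARD('n)" by (rule card_mono) auto
  ultimately show False using assms by simp
qed


lemma eig_n2:
  fixes V :: "real^'p::finite^'n::finite"
  assumes n2: "CARD('n) = 2"
  shows "\<exists>a l. minmax_op V a = (\<chi> i. l + a$i)"
proof -
  define o' where "o' = (\<lambda>i::'n. SOME j. j \<noteq> i)"
  have oi: "o' i \<noteq> i" for i
  proof -
    have "\<exists>j::'n. j \<noteq> i" using exists_other[of i] n2 by simp
    then show ?thesis unfolding o'_def by (rule someI_ex)
  qed
  have S: "{j. j \<noteq> i} = {o' i}" for i 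
  proof (rule set_eqI)
    fix x show "x \<in> {j. j \<noteq> i} \<longleftrightarrow> x \<in> {o' i}"
      using card2_unique[OF n2 _ oi[of i], of x] oi[of i] by auto
  qed
  have U: "(UNIV::'n set) = {i, o' i}" for i
  proof (rule set_eqI)
    fix x show "x \<in> UNIV \<longleftrightarrow> x \<in> {i, o' i}"
    proof (cases "x = i")
      case False then show ?thesis using card2_unique[OF n2 False oi[of i]] by simp
    qed simp
  qed
  have T: "minmax_op V x $ i = minmax_op V 0 $ i + x $ o' i" for x i
  proof -
    have m0: "Min ((\<lambda>k. - V$i$k + V$(o' i)$k) ` UNIV) = minmax_op V 0 $ i"
      unfolding minmax_op_def S by simp
    have "minmax_op V x $ i = Min ((\<lambda>k. (- V$i$k + V$(o' i)$k) + x $ o' i) ` UNIV)"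
      unfolding minmax_op_def S by (simp add: algebra_simps)
    also have "\<dots> = Min ((\<lambda>k. - V$i$k + V$(o' i)$k) ` UNIV) + x $ o' i"
      by (rule Min_plus_const) auto
    finally show ?thesis unfolding m0 .
  qed
  define c where "c = minmax_op V 0"
  define l where "l = sum (\<lambda>j. c$j) UNIV / 2"
  have "minmax_op V (\<chi> i. c$i / 2) = (\<chi> i. l + (\<chi> i. c$i / 2)$i)"
  proof -
    have "minmax_op V (\<chi> i. c$i / 2) $ i = l + c$i/2" for i
    proof -
      have "sum (\<lambda>j. c$j) UNIV = sum (\<lambda>j. c$j) {i, o' i}" by (subst U[of i]) (rule refl)
      also have "\<dots> = c$i + c$(o' i)" using oi[of i] by simp
      finally have sm: "sum (\<lambda>j. c$j) UNIV = c$i + c$(o' i)" .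
      have "minmax_op V (\<chi> i. c$i / 2) $ i = c$i + c$(o' i)/2" using T[of "\<chi> i. c$i / 2" i] unfolding c_def by simp
      then show ?thesis unfolding l_def sm by (simp add: field_simps)
    qed
    then show ?thesis by (simp add: vec_eq_iff)
  qed
  then show ?thesis by (intro exI)
qed
lemma continuous_Max_fam:
  fixes g :: "'a \<Rightarrow> 'b::topological_space \<Rightarrow> real"
  assumes "finite A" "A \<noteq> {}" "\<And>a. a \<in> A \<Longrightarrow> continuous_on S (g a)"
  shows "continuous_on S (\<lambda>x. Max ((\<lambda>a. g a x) ` A))"
  using assms
proof (induction A rule: finite_ne_induct)
  case (singleton a) then show ?case by simp
next
  case (insert a F)
  have "continuous_on S (\<lambda>x. max (g a x) (Max ((\<lambda>a. g a x) ` F)))"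
    using insert by (intro continuous_on_max) auto
  then show ?case using insert by simp
qed

lemma continuous_Min_fam:
  fixes g :: "'a \<Rightarrow> 'b::topological_space \<Rightarrow> real"
  assumes "finite A" "A \<noteq> {}" "\<And>a. a \<in> A \<Longrightarrow> continuous_on S (g a)"
  shows "continuous_on S (\<lambda>x. Min ((\<lambda>a. g a x) ` A))"
  using assms
proof (induction A rule: finite_ne_induct)
  case (singleton a) then show ?case by simp
next
  case (insert a F)
  have "continuous_on S (\<lambda>x. min (g a x) (Min ((\<lambda>a. g a x) ` F)))"
    using insert by (intro continuous_on_min) auto
  then show ?case using insert by simp
qed

lemma minmax_cont:
  fixes V :: "real^'p::finite^'n::finite"
  assumes n2: "CARD('n) \<ge> 2"
  shows "continuous_on S (minmax_op V)"
proof -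
  have "continuous_on S (\<lambda>x. minmax_op V x $ i)" for i
  proof -
    have ne: "{j. j \<noteq> i} \<noteq> {}" using exists_other[OF n2, of i] by auto
    show ?thesis unfolding minmax_op_def vec_lambda_beta
      by (intro continuous_Min_fam continuous_Max_fam continuous_intros ne) auto
  qed
  then have "continuous_on S (\<lambda>x. \<chi> i. minmax_op V x $ i)" by (intro continuous_on_vec_lambda)
  then show ?thesis by simp
qed

lemma minmax_bounds:
  fixes V :: "real^'p::finite^'n::finite"
  assumes n2: "CARD('n) \<ge> 2" and W: "\<And>i k. \<bar>V$i$k\<bar> \<le> W"
  shows "Max ((\<lambda>j. x$j) ` {j. j \<noteq> i}) - 2*W \<le> minmax_op V x $ i"
    and "minmax_op V x $ i \<le> Max ((\<lambda>j. x$j) ` {j. j \<noteq> i}) + 2*W"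
proof -
  have ne: "{j. j \<noteq> i} \<noteq> {}" using exists_other[OF n2, of i] by auto
  define M where "M = Max ((\<lambda>j. x$j) ` {j. j \<noteq> i})"
  obtain j0 where j0: "j0 \<noteq> i" "x$j0 = M"
  proof -
    have "M \<in> (\<lambda>j. x$j) ` {j. j \<noteq> i}" unfolding M_def using ne by (intro Max_in) auto
    then show ?thesis using that by auto
  qed
  have xle: "x$j \<le> M" if "j \<noteq> i" for j unfolding M_def using that by (intro Max_ge) auto
  have inner: "M - 2*W \<le> - V$i$k + Max ((\<lambda>j. V$j$k + x$j) ` {j. j \<noteq> i}) \<and>
      - V$i$k + Max ((\<lambda>j. V$j$k + x$j) ` {j. j \<noteq> i}) \<le> M + 2*W" for k
  proof -
    have "V$j0$k + x$j0 \<le> Max ((\<lambda>j. V$j$k + x$j) ` {j. j \<noteq> i})" using j0 by (intro Max_ge) auto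
    moreover have "Max ((\<lambda>j. V$j$k + x$j) ` {j. j \<noteq> i}) \<le> W + M"
      using ne xle W by (subst Max_le_iff) (auto simp: abs_le_iff intro: add_mono)
    moreover have "\<bar>V$i$k\<bar> \<le> W" "\<bar>V$j0$k\<bar> \<le> W" using W by auto
    ultimately show ?thesis using j0 by (auto simp: abs_le_iff)
  qed
  show "M - 2*W \<le> minmax_op V x $ i" unfolding minmax_op_def vec_lambda_beta
    using inner by (subst Min_ge_iff) auto
  show "minmax_op V x $ i \<le> M + 2*W" unfolding minmax_op_def vec_lambda_beta
    using inner[of undefined] by (subst Min_le_iff) auto
qed



lemma eig_n3:
  fixes V :: "real^'p::finite^'n::finite"
  assumes n3: "CARD('n) \<ge> 3"
  shows "\<exists>a l. minmax_op V a = (\<chi> i. l + a$i)"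
proof -
  have n2: "CARD('n) \<ge> 2" using n3 by simp
  define W where "W = sum (\<lambda>i. sum (\<lambda>k. \<bar>V$i$k\<bar>) UNIV) UNIV"
  have W: "\<bar>V$i$k\<bar> \<le> W" for i k
  proof -
    have "\<bar>V$i$k\<bar> \<le> sum (\<lambda>k. \<bar>V$i$k\<bar>) UNIV" by (rule member_le_sum) auto
    also have "\<dots> \<le> W" unfolding W_def
      by (rule member_le_sum[of i UNIV "\<lambda>i. sum (\<lambda>k. \<bar>V$i$k\<bar>) UNIV"]) (auto intro: sum_nonneg)
    finally show ?thesis .
  qed
  have W0: "0 \<le> W" using W[of undefined undefined] by simp
  define A where "A = 16 * W"
  have A0: "0 \<le> A" using W0 A_def by simp
  define K where "K = {x::real^'n. sum (\<lambda>i. x$i) UNIV = 0 \<and> (\<forall>i j l. i \<noteq> j \<longrightarrow> - A \<le> x$i + x$j - 2 * x$l)}"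
  define N where "N = real CARD('n)"
  have Npos: "N > 0" unfolding N_def by simp
  define f where "f = (\<lambda>x. \<chi> i. minmax_op V x $ i - sum (\<lambda>j. minmax_op V x $ j) UNIV / N)"
  have other2: "\<exists>s t. s \<noteq> t \<and> s \<noteq> j \<and> t \<noteq> j" for j::'n
  proof -
    obtain s where s: "s \<noteq> j" using exists_other[OF n2, of j] by blast
    have "card {j, s} = 2" using s by simp
    then have "card (UNIV - {j, s}) \<ge> 1" using n3 by (subst card_Diff_subset) auto
    then have "UNIV - {j, s} \<noteq> {}" by (metis card.empty not_one_le_zero)
    then obtain t where "t \<in> UNIV - {j, s}" by blast
    then show ?thesis using s by blast
  qed
  have Kdiff: "x$i - x$l \<ge> -A" if "x \<in> K" for x i l
  proof (cases "i = l")
    case True then show ?thesis using A0 by simp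
  next
    case False
    then have "-A \<le> x$i + x$l - 2*x$l" using that unfolding K_def by blast
    then show ?thesis by simp
  qed
  have Kbound: "\<bar>x$i\<bar> \<le> A" if "x \<in> K" for x i
  proof -
    have s0: "sum (\<lambda>l. x$l) UNIV = 0" using that K_def by simp
    have e1: "sum (\<lambda>l. x$i - x$l) UNIV = N * x$i" using s0 by (simp add: sum_subtractf N_def)
    have e2: "sum (\<lambda>l. x$i - x$l) UNIV \<ge> sum (\<lambda>l. -A) (UNIV::'n set)" using Kdiff[OF that, of i] by (intro sum_mono) auto
    have e3: "sum (\<lambda>l. x$l - x$i) UNIV = - N * x$i" using s0 by (simp add: sum_subtractf N_def)
    have e4: "sum (\<lambda>l. x$l - x$i) UNIV \<ge> sum (\<lambda>l. -A) (UNIV::'n set)" using Kdiff[OF that, of _ i] by (intro sum_mono) auto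
    have "N * (x$i + A) \<ge> 0" using e1 e2 by (simp add: N_def algebra_simps)
    then have "x$i + A \<ge> 0" using Npos by (simp add: zero_le_mult_iff)
    moreover have "N * (A - x$i) \<ge> 0" using e3 e4 by (simp add: N_def algebra_simps)
    then have "A - x$i \<ge> 0" using Npos by (simp add: zero_le_mult_iff)
    ultimately show ?thesis by (simp add: abs_le_iff)
  qed
  have Kcomp: "compact K"
  unfolding compact_eq_bounded_closed
  proof (intro conjI)
    have "K \<subseteq> cbox (\<chi> i. - A) (\<chi> i. A)" 
    proof
      fix x assume "x \<in> K"
      then have "\<bar>x$i\<bar> \<le> A" for i using Kbound by blast
      then show "x \<in> cbox (\<chi> i. - A) (\<chi> i. A)" unfolding mem_box_cart by (simp add: abs_le_iff) (metis minus_le_iff)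
    qed
    then show "bounded K" by (rule bounded_subset[OF bounded_cbox])
    have c1: "closed {x::real^'n. sum (\<lambda>i. x$i) UNIV = 0}"
      by (intro closed_Collect_eq continuous_intros)
    have c2: "closed {x::real^'n. i \<noteq> j \<longrightarrow> - A \<le> x$i + x$j - 2 * x$l}" for i j l
      by (cases "i = j") (auto intro!: closed_Collect_le continuous_intros)
    have "closed {x::real^'n. \<forall>i j l. i \<noteq> j \<longrightarrow> - A \<le> x$i + x$j - 2 * x$l}"
      by (intro closed_Collect_all c2)
    then show "closed K" unfolding K_def using c1 by (intro closed_Collect_conj)
  qed
  have Kconv: "convex K"
  proof (rule convexI)
    fix x y :: "real^'n" and u v :: real
    assume xK: "x \<in> K" and yK: "y \<in> K" and "0 \<le> u" "0 \<le> v" "u + v = 1"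
    then have uv: "0 \<le> u \<and> 0 \<le> v \<and> u + v = 1" by simp
    have "sum (\<lambda>i. (u *\<^sub>R x + v *\<^sub>R y)$i) UNIV = u * sum (\<lambda>i. x$i) UNIV + v * sum (\<lambda>i. y$i) UNIV"
      by (simp add: sum.distrib sum_distrib_left)
    then have s: "sum (\<lambda>i. (u *\<^sub>R x + v *\<^sub>R y)$i) UNIV = 0" using xK yK K_def by simp
    have "- A \<le> (u *\<^sub>R x + v *\<^sub>R y)$i + (u *\<^sub>R x + v *\<^sub>R y)$j - 2 * (u *\<^sub>R x + v *\<^sub>R y)$l"
      if "i \<noteq> j" for i j l
    proof -
      have ex: "(u *\<^sub>R x + v *\<^sub>R y)$i + (u *\<^sub>R x + v *\<^sub>R y)$j - 2 * (u *\<^sub>R x + v *\<^sub>R y)$l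
          = u * (x$i + x$j - 2*x$l) + v * (y$i + y$j - 2*y$l)" by (simp add: algebra_simps)
      have "u * (-A) \<le> u * (x$i + x$j - 2*x$l)" using uv xK that K_def by (intro mult_left_mono) auto
      moreover have "v * (-A) \<le> v * (y$i + y$j - 2*y$l)" using uv yK that K_def by (intro mult_left_mono) auto
      moreover have "u * (-A) + v * (-A) = -A"
      proof -
        have "u * (-A) + v * (-A) = - ((u + v) * A)" by (simp add: algebra_simps)
        then show ?thesis using uv by simp
      qed
      ultimately show ?thesis unfolding ex by linarith
    qed
    then show "u *\<^sub>R x + v *\<^sub>R y \<in> K" using s K_def by auto
  qed
  have Kne: "K \<noteq> {}"
  proof -
    have "0 \<in> K" unfolding K_def using A0 by simp
    then show ?thesis by blast
  qed
  have fcont: "continuous_on K f" unfolding f_def using Npos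
    by (intro continuous_intros minmax_cont[OF n2]) auto
  have finv: "f x \<in> K" if xK: "x \<in> K" for x
  proof -
    define y where "y = minmax_op V x"
    define m where "m = sum (\<lambda>j. y$j) UNIV / N"
    have fx: "f x $ i = y$i - m" for i unfolding f_def y_def m_def by simp
    have sum0: "sum (\<lambda>i. f x $ i) UNIV = 0"
    proof -
      have "sum (\<lambda>i. f x $ i) UNIV = sum (\<lambda>j. y$j) UNIV - N * m"
        unfolding fx by (simp add: sum_subtractf N_def)
      then show ?thesis unfolding m_def using Npos by simp
    qed
    define Mx where "Mx = (\<lambda>i. Max ((\<lambda>j. x$j) ` {j. j \<noteq> i}))"
    define mx where "mx = Max (range (\<lambda>j. x$j))"
    obtain mm where mm: "x$mm = mx"
    proof -
      have "mx \<in> range (\<lambda>j. x$j)" unfolding mx_def by (intro Max_in) auto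
      then show ?thesis using that by auto
    qed
    have xle: "x$j \<le> mx" for j unfolding mx_def by (intro Max_ge) auto
    have neq: "{j. j \<noteq> i} \<noteq> {}" for i :: 'n using exists_other[OF n2, of i] by auto
    have Mxle: "Mx i \<le> mx" for i unfolding Mx_def using neq[of i] xle by (subst Max_le_iff) auto
    have Mxge: "x$q \<le> Mx i" if "q \<noteq> i" for q i unfolding Mx_def using that by (intro Max_ge) auto
    have Mhalf: "2 * Mx j \<ge> 2 * mx - A" for j
    proof -
      obtain s t where st: "s \<noteq> t" "s \<noteq> j" "t \<noteq> j" using other2[of j] by blast
      have "- A \<le> x$s + x$t - 2 * x$mm" using xK st K_def by blast
      moreover have "x$s \<le> Mx j" "x$t \<le> Mx j" using Mxge st by auto
      ultimately show ?thesis using mm by linarith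
    qed
    have yb: "Mx i - 2*W \<le> y$i" "y$i \<le> Mx i + 2*W" for i
      unfolding y_def Mx_def using minmax_bounds[OF n2 W] by auto
    have "- A \<le> f x $ i + f x $ j - 2 * f x $ l" if "i \<noteq> j" for i j l
    proof -
      have "Mx i + Mx j \<ge> 2 * mx - A/2"
      proof (cases "mm = i")
        case True
        then have "mm \<noteq> j" using that by simp
        then have "x$mm \<le> Mx j" using Mxge by blast
        then show ?thesis using Mhalf[of i] mm by linarith
      next
        case False
        then have "x$mm \<le> Mx i" using Mxge by blast
        then show ?thesis using Mhalf[of j] mm by linarith
      qed
      moreover have "y$i \<ge> Mx i - 2*W" "y$j \<ge> Mx j - 2*W" "y$l \<le> mx + 2*W"
        using yb[of i] yb[of j] yb[of l] Mxle[of l] by auto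
      ultimately have "- A \<le> y$i + y$j - 2 * y$l" unfolding A_def by linarith
      then show ?thesis unfolding fx by (simp add: algebra_simps)
    qed
    then show ?thesis using sum0 unfolding K_def by blast
  qed
  obtain x where xK: "x \<in> K" and fx: "f x = x"
    using brouwer[OF Kcomp Kconv Kne fcont] finv by blast
  define m where "m = sum (\<lambda>j. minmax_op V x $ j) UNIV / N"
  have "minmax_op V x $ i = m + x$i" for i
  proof -
    have "f x $ i = x $ i" using fx by simp
    then show ?thesis unfolding f_def m_def by simp
  qed
  then have "minmax_op V x = (\<chi> i. m + x$i)" by (simp add: vec_eq_iff)
  then show ?thesis by (intro exI)
qed


theorem proposition4p9:
  fixes V :: "real^'p::finite^'n::finite"
  assumes "CARD('n) \<ge> 2"
  shows "\<exists>(a::real^'n) (l::real). minmax_op V a = (\<chi> i. l + a$i) \<and> ereal l = spectral_rho V"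
proof -
  have "\<exists>a l. minmax_op V a = (\<chi> i. l + a$i)"
  proof (cases "CARD('n) = 2")
    case True then show ?thesis by (rule eig_n2)
  next
    case False then have "CARD('n) \<ge> 3" using assms by simp
    then show ?thesis by (rule eig_n3)
  qed
  then obtain a l where e: "minmax_op V a = (\<chi> i. l + a$i)" by blast
  then have "spectral_rho V = ereal l" by (rule rho_eq[OF assms])
  then show ?thesis using e by auto
qed

end
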